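(* Let $A$ be a commutative semiring and $a,b\in A$. Let $R(a,b)=\{(ax+by+z,\ bx+ay+z):x,y,z\in A\}$. Then $R(a,b)_+$ is a congruence on $A$, and $R(a,b)\subseteq\rho\subseteq R(a,b)_+\subseteq\rho_+$, where $\rho=\{(a,b)\}^{c}$.
   Context: Semirings are commutative with $0$ and $1\neq0$, $0a=0$; congruences are equivalence relations compatible with $+,\cdot$. For a relation $R$, $R_+=\{(u,v)\in A\times A:(u+c,v+c)\in R$ for some $c\in A\}$; $\{(a,b)\}^{c}$ is the congruence generated by the pair $(a,b)$. *)

theory Defs
  imports Main
begin

definition is_congruence :: "('a::comm_semiring_1 \<times> 'a) set \<Rightarrow> bool" where
  "is_congruence R \<longleftrightarrow> equiv UNIV R \<and>
     (\<forall>a b c d. (a, b) \<in> R \<longrightarrow> (c, d) \<in> R \<longrightarrow> (a + c, b + d) \<in> R \<and> (a * c, b * d) \<in> R)"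

definition gen_congruence :: "('a::comm_semiring_1 \<times> 'a) set \<Rightarrow> ('a \<times> 'a) set" where
  "gen_congruence S = \<Inter> {R. is_congruence R \<and> S \<subseteq> R}"

definition plus_closure :: "('a::comm_semiring_1 \<times> 'a) set \<Rightarrow> ('a \<times> 'a) set" where
  "plus_closure R = {(u, v). \<exists>c. (u + c, v + c) \<in> R}"

definition Rab :: "'a::comm_semiring_1 \<Rightarrow> 'a \<Rightarrow> ('a \<times> 'a) set" where
  "Rab a b = {(a * x + b * y + z, b * x + a * y + z) | x y z. True}"

end

theory Submission
  imports Defs
begin

lemma Rab_I: "(a * x + b * y + z, b * x + a * y + z) \<in> Rab a b"
  unfolding Rab_def by blast

lemma Rab_E: assumes "(u, v) \<in> Rab a b"
  obtains x y z where "u = a * x + b * y + z" "v = b * x + a * y + z"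
  using assms unfolding Rab_def by blast

lemma P_I: "(u + c, v + c) \<in> Rab a b \<Longrightarrow> (u, v) \<in> plus_closure (Rab a b)"
  unfolding plus_closure_def by blast

lemma P_E: "(u, v) \<in> plus_closure (Rab a b) \<Longrightarrow> \<exists>c. (u + c, v + c) \<in> Rab a b"
  unfolding plus_closure_def by blast

lemma Rab_refl: "(u, u) \<in> Rab a b"
  using Rab_I[of a 0 b 0 u] by simp

lemma Rab_sym: assumes "(u, v) \<in> Rab a b" shows "(v, u) \<in> Rab a b"
proof -
  obtain x y z where "u = a * x + b * y + z" "v = b * x + a * y + z" using assms by (rule Rab_E)
  then show ?thesis using Rab_I[of a y b x z] by (simp add: ac_simps)
qed

lemma Rab_add: assumes "(u, v) \<in> Rab a b" "(u', v') \<in> Rab a b"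
  shows "(u + u', v + v') \<in> Rab a b"
proof -
  obtain x y z where "u = a * x + b * y + z" "v = b * x + a * y + z" using assms(1) by (rule Rab_E)
  moreover obtain x' y' z' where "u' = a * x' + b * y' + z'" "v' = b * x' + a * y' + z'" using assms(2) by (rule Rab_E)
  ultimately show ?thesis using Rab_I[of a "x+x'" b "y+y'" "z+z'"] by (simp add: algebra_simps)
qed

lemma Rab_mult: assumes "(u, v) \<in> Rab a b"
  shows "(t * u, t * v) \<in> Rab a b"
proof -
  obtain x y z where "u = a * x + b * y + z" "v = b * x + a * y + z" using assms by (rule Rab_E)
  then show ?thesis using Rab_I[of a "t*x" b "t*y" "t*z"] by (simp add: algebra_simps)
qed

lemma P_trans: assumes "(u, v) \<in> plus_closure (Rab a b)" "(v, w) \<in> plus_closure (Rab a b)"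
  shows "(u, w) \<in> plus_closure (Rab a b)"
proof -
  obtain c where c: "(u + c, v + c) \<in> Rab a b" using P_E[OF assms(1)] by blast
  obtain d where d: "(v + d, w + d) \<in> Rab a b" using P_E[OF assms(2)] by blast
  have "(u + c + (v + d), v + c + (w + d)) \<in> Rab a b" using Rab_add[OF c d] .
  then have "(u + (c + v + d), w + (c + v + d)) \<in> Rab a b" by (simp add: ac_simps)
  then show ?thesis by (rule P_I)
qed

lemma P_add: assumes "(u, v) \<in> plus_closure (Rab a b)" "(u', v') \<in> plus_closure (Rab a b)"
  shows "(u + u', v + v') \<in> plus_closure (Rab a b)"
proof -
  obtain c where c: "(u + c, v + c) \<in> Rab a b" using P_E[OF assms(1)] by blast
  obtain d where d: "(u' + d, v' + d) \<in> Rab a b" using P_E[OF assms(2)] by blast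
  have "(u + c + (u' + d), v + c + (v' + d)) \<in> Rab a b" using Rab_add[OF c d] .
  then have "(u + u' + (c + d), v + v' + (c + d)) \<in> Rab a b" by (simp add: ac_simps)
  then show ?thesis by (rule P_I)
qed

lemma P_smult: assumes "(u, v) \<in> plus_closure (Rab a b)"
  shows "(t * u, t * v) \<in> plus_closure (Rab a b)"
proof -
  obtain c where c: "(u + c, v + c) \<in> Rab a b" using P_E[OF assms(1)] by blast
  have "(t * (u + c), t * (v + c)) \<in> Rab a b" using Rab_mult[OF c] .
  then have "(t * u + t * c, t * v + t * c) \<in> Rab a b" by (simp add: algebra_simps)
  then show ?thesis by (rule P_I)
qed

lemma P_mult: assumes "(u, v) \<in> plus_closure (Rab a b)" "(u', v') \<in> plus_closure (Rab a b)"
  shows "(u * u', v * v') \<in> plus_closure (Rab a b)"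
proof -
  have "(u' * u, u' * v) \<in> plus_closure (Rab a b)" using P_smult[OF assms(1)] .
  moreover have "(v * u', v * v') \<in> plus_closure (Rab a b)" using P_smult[OF assms(2)] .
  ultimately show ?thesis using P_trans by (metis mult.commute)
qed

lemma P_cong: "is_congruence (plus_closure (Rab a b))"
  unfolding is_congruence_def equiv_def
proof (intro conjI allI impI)
  show "refl (plus_closure (Rab a b))"
    by (rule refl_onI) (auto intro: P_I[of _ 0] Rab_refl)
  show "sym (plus_closure (Rab a b))"
    by (rule symI) (auto simp: plus_closure_def intro: Rab_sym)
  show "trans (plus_closure (Rab a b))"
    by (rule transI) (rule P_trans)
qed (auto intro: P_add P_mult)

lemma Rab_sub_cong: assumes "is_congruence R" "(a, b) \<in> R" shows "Rab a b \<subseteq> R"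
proof
  fix p assume "p \<in> Rab a b"
  then obtain x y z where p: "p = (a * x + b * y + z, b * x + a * y + z)" unfolding Rab_def by blast
  have eq: "equiv UNIV R" and cl: "\<And>a b c d. (a, b) \<in> R \<Longrightarrow> (c, d) \<in> R \<Longrightarrow> (a + c, b + d) \<in> R \<and> (a * c, b * d) \<in> R"
    using assms(1) unfolding is_congruence_def by blast+
  have r: "\<And>t. (t, t) \<in> R" using eq by (simp add: equiv_def refl_on_def)
  have ba: "(b, a) \<in> R" using eq assms(2) by (meson equiv_def symD)
  have 1: "(a * x, b * x) \<in> R" using cl[OF assms(2) r] by blast
  have 2: "(b * y, a * y) \<in> R" using cl[OF ba r] by blast
  have "(a * x + b * y, b * x + a * y) \<in> R" using cl[OF 1 2] by blast
  then have "(a * x + b * y + z, b * x + a * y + z) \<in> R" using cl[OF _ r] by blast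
  then show "p \<in> R" using p by simp
qed

theorem proposition2p21:
  fixes a b :: "'a::comm_semiring_1"
  defines "\<rho> \<equiv> gen_congruence {(a, b)}"
  shows "is_congruence (plus_closure (Rab a b))
    \<and> Rab a b \<subseteq> \<rho> \<and> \<rho> \<subseteq> plus_closure (Rab a b)
    \<and> plus_closure (Rab a b) \<subseteq> plus_closure \<rho>"
proof (intro conjI)
  show C: "is_congruence (plus_closure (Rab a b))" by (rule P_cong)
  show S: "Rab a b \<subseteq> \<rho>" unfolding \<rho>_def gen_congruence_def using Rab_sub_cong by blast
  have "(a, b) \<in> plus_closure (Rab a b)"
    using P_I[of a 0 b a b] Rab_I[of a 1 b 0 0] by simp
  then show "\<rho> \<subseteq> plus_closure (Rab a b)" unfolding \<rho>_def gen_congruence_def using C by blast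
  show "plus_closure (Rab a b) \<subseteq> plus_closure \<rho>" using S unfolding plus_closure_def by blast
qed

end
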